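(* For every integer $k$ and every integer $n\geq 0$, \[ b_{n}^{(k)}(x)=\sum_{l=0}^{n}\binom{n}{l}\left(\sum_{p=1}^{l+1}\frac{(-1)^{p+l+1}}{p^{k}}\,p!\,\frac{S_{2}(l+1,p)}{l+1}\right)b_{n-l}(x). \]
   Context: For $k\in\mathbb{Z}$, the polylogarithm is $Li_k(x)=\sum_{n=1}^{\infty}\frac{x^n}{n^k}$. The poly-Bernoulli polynomials of the second kind $b_n^{(k)}(x)$ are defined by the generating function \[ \frac{Li_{k}(1-e^{-t})}{\log(1+t)}(1+t)^{x}=\sum_{n=0}^{\infty}b_{n}^{(k)}(x)\frac{t^{n}}{n!}. \] The Bernoulli polynomials of the second kind $b_n(x)$ are defined by $\frac{t}{\log(1+t)}(1+t)^x=\sum_{n=0}^{\infty}b_n(x)\frac{t^n}{n!}$. $S_2(n,l)$ denotes the Stirling numbers of the second kind, defined by $x^n=\sum_{l=0}^{n}S_2(n,l)(x)_l$, where $(x)_l=x(x-1)\cdots(x-l+1)$. *)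

theory Defs
  imports "HOL-Computational_Algebra.Formal_Power_Series" "HOL-Combinatorics.Stirling"
begin

definition polylog_fps :: "int \<Rightarrow> real fps" where
  "polylog_fps k = Abs_fps (\<lambda>m. if m = 0 then 0 else 1 / (real m powi k))"

text \<open>Generating function Li_k(1 - e^(-t)) / log(1+t) * (1+t)^x, as a formal power series in t.
  fps_ln 1 is log(1+t), fps_binomial x is (1+t)^x, fps_exp (-1) is e^(-t).\<close>
definition poly_bernoulli2 :: "int \<Rightarrow> nat \<Rightarrow> real \<Rightarrow> real" where
  "poly_bernoulli2 k n x =
     fact n * fps_nth ((polylog_fps k oo (1 - fps_exp (-1))) / fps_ln 1 * fps_binomial x) n"

definition bernoulli2 :: "nat \<Rightarrow> real \<Rightarrow> real" where
  "bernoulli2 n x = fact n * fps_nth (fps_X / fps_ln 1 * fps_binomial x) n"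

end

theory Submission
  imports Defs
begin

lemma gderiv: "fps_deriv (1 - fps_exp (-1::real)) = 1 - (1 - fps_exp (-1))"
proof -
  have "fps_const (-1::real) = -1" by (simp add: fps_eq_iff)
  thus ?thesis by simp
qed

lemma gpow_nth:
  "fps_nth ((1 - fps_exp (-1::real)) ^ p) m = (-1) ^ (p + m) * fact p * real (Stirling m p) / fact m"
proof (induction m arbitrary: p)
  case 0
  then show ?case by (cases p) auto
next
  case (Suc m)
  show ?case
  proof (cases p)
    case 0 then show ?thesis by simp
  next
    case (Suc q)
    let ?g = "1 - fps_exp (-1::real)"
    have "fps_deriv (?g ^ Suc q) = of_nat (Suc q) * ?g ^ q * (1 - ?g)"
      by (simp only: fps_deriv_power' gderiv diff_Suc_1 mult_ac)
    also have "\<dots> = of_nat (Suc q) * (?g ^ q - ?g ^ Suc q)"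
      by (simp add: algebra_simps)
    finally have "fps_nth (fps_deriv (?g ^ Suc q)) m = of_nat (Suc q) * (fps_nth (?g ^ q) m - fps_nth (?g ^ Suc q) m)"
      by (metis fps_mult_left_const_nth fps_of_nat fps_sub_nth)
    hence "of_nat (m+1) * fps_nth (?g ^ Suc q) (m+1) = real (Suc q) * (fps_nth (?g ^ q) m - fps_nth (?g ^ Suc q) m)"
      by (simp only: fps_deriv_nth)
    hence "fps_nth (?g ^ Suc q) (Suc m) = real (Suc q) * (fps_nth (?g ^ q) m - fps_nth (?g ^ Suc q) m) / real (Suc m)"
      by (simp add: field_simps)
    also have "\<dots> = (-1) ^ (Suc q + Suc m) * fact (Suc q) * real (Stirling (Suc m) (Suc q)) / fact (Suc m)"
      unfolding Suc.IH by (simp add: field_simps)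
    finally show ?thesis using Suc by simp
  qed
qed
theorem theorem2:
  fixes k :: int and n :: nat and x :: real
  shows "poly_bernoulli2 k n x =
    (\<Sum>l = 0..n. real (n choose l) *
       (\<Sum>p = 1..l+1. (-1) ^ (p + l + 1) / (real p powi k) * fact p
           * real (Stirling (l+1) p) / real (l+1))
       * bernoulli2 (n - l) x)"
proof -
  define g where "g = 1 - fps_exp (-1::real)"
  define L where "L = polylog_fps k oo g"
  define L' where "L' = fps_shift 1 L"
  define h where "h = fps_ln (1::real)"
  define B where "B = fps_X / h * fps_binomial x"
  define c where "c l = (\<Sum>p = 1..l+1. (-1) ^ (p + l + 1) / (real p powi k) * fact p
           * real (Stirling (l+1) p) / real (l+1))" for l
  have L0: "fps_nth L 0 = 0" by (simp add: L_def polylog_fps_def)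
  have LX: "L = L' * fps_X"
    by (rule fps_ext) (use L0 in \<open>auto simp: L'_def mult.commute[of _ fps_X]\<close>)
  have sh: "subdegree h \<le> subdegree (fps_X :: real fps)"
    unfolding subdegree_fps_X by (rule subdegree_leI) (simp add: h_def fps_ln_nth)
  have G: "(polylog_fps k oo (1 - fps_exp (-1))) / fps_ln 1 * fps_binomial x = L' * B"
    unfolding L_def[symmetric] g_def[symmetric] h_def[symmetric] B_def LX
    using fps_divide_times[OF sh, of L'] by (simp add: mult.assoc)
  have L'n: "fact l * fps_nth L' l = c l" for l
  proof -
    have "fps_nth L' l = (\<Sum>i=0..l+1. fps_nth (polylog_fps k) i * fps_nth (g^i) (l+1))"
      by (simp add: L'_def L_def fps_compose_nth)
    also have "\<dots> = (\<Sum>i=1..l+1. fps_nth (polylog_fps k) i * fps_nth (g^i) (l+1))"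
      by (rule sum.mono_neutral_right) (auto simp: polylog_fps_def)
    also have "\<dots> = (\<Sum>p=1..l+1. 1 / (real p powi k) * ((-1) ^ (p + (l+1)) * fact p * real (Stirling (l+1) p) / fact (l+1)))"
      by (rule sum.cong) (auto simp: polylog_fps_def g_def gpow_nth)
    finally have e: "fact l * fps_nth L' l = (\<Sum>p=1..l+1. fact l * (1 / (real p powi k) * ((-1) ^ (p + (l+1)) * fact p * real (Stirling (l+1) p) / fact (l+1))))"
      by (simp only: sum_distrib_left)
    show ?thesis unfolding c_def e
    proof (rule sum.cong[OF refl])
      fix p
      have f: "(fact (l+1) :: real) = real (l+1) * fact l" by simp
      show "fact l * (1 / (real p powi k) * ((-1) ^ (p + (l+1)) * fact p * real (Stirling (l+1) p) / fact (l+1)))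
          = (-1) ^ (p + l + 1) / (real p powi k) * fact p * real (Stirling (l+1) p) / real (l+1)"
        unfolding f by (simp add: add.assoc)
    qed
  qed
  have "poly_bernoulli2 k n x = fact n * (\<Sum>l=0..n. fps_nth L' l * fps_nth B (n - l))"
    unfolding poly_bernoulli2_def G fps_mult_nth ..
  also have "\<dots> = (\<Sum>l=0..n. real (n choose l) * c l * bernoulli2 (n - l) x)"
    unfolding sum_distrib_left
  proof (rule sum.cong[OF refl])
    fix l assume "l \<in> {0..n}"
    hence ln: "l \<le> n" by simp
    have "real (n choose l) * c l * bernoulli2 (n - l) x
        = fact n / (fact l * fact (n - l)) * (fact l * fps_nth L' l) * (fact (n-l) * fps_nth B (n-l))"
      by (simp add: binomial_fact[OF ln] L'n bernoulli2_def B_def h_def)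
    also have "\<dots> = fact n * (fps_nth L' l * fps_nth B (n - l))"
      by (simp add: field_simps)
    finally show "fact n * (fps_nth L' l * fps_nth B (n - l)) = real (n choose l) * c l * bernoulli2 (n - l) x" by simp
  qed
  finally show ?thesis unfolding c_def .
qed
end
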